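(* Let $G\subset\mathrm{Diff}^1_+(\mathbb{S}^2)$ be a sharply $3$-transitive group containing the rotation group $\mathrm{Rot}(\mathbb{S}^2)$. Then every $g\in G_2$ is conformal at the poles $\mathbf{0}$ and $\mathbf{\infty}$, i.e. $Dg(\mathbf{0})$ and $Dg(\mathbf{\infty})$ are conformal linear maps (positive multiples of rotations).
   Context: $\mathrm{Diff}^1_+(\mathbb{S}^2)$ is the group of orientation-preserving $C^1$ diffeomorphisms of the unit sphere; $\mathrm{Rot}(\mathbb{S}^2)=SO(3)$ acting on $\mathbb{S}^2$. $\mathbb{S}^2$ is identified with $\mathbb{C}\cup\{\infty\}$ by stereographic projection from the North Pole $\mathbf{\infty}$; $\mathbf{0}$ is the South Pole. $G_2=\{g\in G: g(\mathbf{0})=\mathbf{0},\ g(\mathbf{\infty})=\mathbf{\infty}\}$. $G$ is sharply $3$-transitive if any triple of distinct points can be mapped onto any other triple of distinct points by an element of $G$, and the only element of $G$ fixing each point of a triple of distinct points is the identity. *)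

theory Defs
  imports "HOL-Analysis.Analysis"
begin

definition S2 :: "(real^3) set" where
  "S2 = sphere 0 1"

text \<open>North pole (the point at infinity under stereographic projection) and South pole (the point 0).\<close>
definition north_pole :: "real^3" where
  "north_pole = axis 3 1"

definition south_pole :: "real^3" where
  "south_pole = axis 3 (-1)"

text \<open>Radial extension of a map of the sphere to R^3 minus the origin; a map of S2 is C^1
  iff its radial extension is C^1 on R^3 - {0}, and the derivative of the radial
  extension at p in S2, restricted to the tangent plane p-perp, is the tangent map Dg(p).\<close>
definition rext :: "(real^3 \<Rightarrow> real^3) \<Rightarrow> real^3 \<Rightarrow> real^3" where
  "rext f = (\<lambda>x. f (x /\<^sub>R norm x))"

definition C1_S2 :: "(real^3 \<Rightarrow> real^3) \<Rightarrow> bool" where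
  "C1_S2 f \<longleftrightarrow> f ` S2 \<subseteq> S2 \<and>
     (\<exists>D :: real^3 \<Rightarrow> real^3^3.
        (\<forall>x. x \<noteq> 0 \<longrightarrow> (rext f has_derivative (\<lambda>h. D x *v h)) (at x))
        \<and> continuous_on (- {0}) D)"

text \<open>Orientation preserving: the tangent map sends positively oriented tangent bases
  (w.r.t. the outward normal) to positively oriented tangent bases.\<close>
definition orientation_preserving_S2 :: "(real^3 \<Rightarrow> real^3) \<Rightarrow> bool" where
  "orientation_preserving_S2 g \<longleftrightarrow>
     (\<forall>p\<in>S2. \<forall>u v L. u \<bullet> p = 0 \<and> v \<bullet> p = 0 \<and> det (vector [p, u, v] :: real^3^3) > 0
        \<and> (rext g has_derivative L) (at p)
        \<longrightarrow> det (vector [g p, L u, L v] :: real^3^3) > 0)"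

text \<open>Orientation-preserving C^1 diffeomorphisms of S2 (only values on S2 matter).\<close>
definition Diff1_plus_S2 :: "(real^3 \<Rightarrow> real^3) set" where
  "Diff1_plus_S2 = {g. bij_betw g S2 S2 \<and> C1_S2 g \<and> C1_S2 (inv_into S2 g)
                        \<and> orientation_preserving_S2 g}"

text \<open>G is a group of maps of S2 under composition (maps identified when equal on S2).\<close>
definition group_on_S2 :: "(real^3 \<Rightarrow> real^3) set \<Rightarrow> bool" where
  "group_on_S2 G \<longleftrightarrow>
     (\<exists>e\<in>G. \<forall>x\<in>S2. e x = x) \<and>
     (\<forall>g\<in>G. \<forall>h\<in>G. \<exists>k\<in>G. \<forall>x\<in>S2. k x = g (h x)) \<and>
     (\<forall>g\<in>G. \<exists>k\<in>G. \<forall>x\<in>S2. k (g x) = x \<and> g (k x) = x)"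

definition contains_rotations :: "(real^3 \<Rightarrow> real^3) set \<Rightarrow> bool" where
  "contains_rotations G \<longleftrightarrow>
     (\<forall>A :: real^3^3. orthogonal_matrix A \<and> det A = 1 \<longrightarrow>
        (\<exists>g\<in>G. \<forall>x\<in>S2. g x = A *v x))"

definition sharply_3_transitive_S2 :: "(real^3 \<Rightarrow> real^3) set \<Rightarrow> bool" where
  "sharply_3_transitive_S2 G \<longleftrightarrow>
     (\<forall>x1\<in>S2. \<forall>x2\<in>S2. \<forall>x3\<in>S2. \<forall>y1\<in>S2. \<forall>y2\<in>S2. \<forall>y3\<in>S2.
        x1 \<noteq> x2 \<and> x1 \<noteq> x3 \<and> x2 \<noteq> x3 \<and> y1 \<noteq> y2 \<and> y1 \<noteq> y3 \<and> y2 \<noteq> y3 \<longrightarrow>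
        (\<exists>g\<in>G. g x1 = y1 \<and> g x2 = y2 \<and> g x3 = y3)) \<and>
     (\<forall>g\<in>G. \<forall>x1\<in>S2. \<forall>x2\<in>S2. \<forall>x3\<in>S2.
        x1 \<noteq> x2 \<and> x1 \<noteq> x3 \<and> x2 \<noteq> x3 \<and> g x1 = x1 \<and> g x2 = x2 \<and> g x3 = x3 \<longrightarrow>
        (\<forall>x\<in>S2. g x = x))"

text \<open>At a pole p, the tangent plane is spanned by e1 = axis 1 1, e2 = axis 2 1.
  A linear map L is conformal there if its restriction to the tangent plane is a
  positive multiple of a rotation.\<close>
definition conformal_at_pole :: "(real^3 \<Rightarrow> real^3) \<Rightarrow> bool" where
  "conformal_at_pole L \<longleftrightarrow>
     (\<exists>c>0. \<exists>\<theta>::real.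
        L (axis 1 1) = c *\<^sub>R (cos \<theta> *\<^sub>R axis 1 1 + sin \<theta> *\<^sub>R axis 2 1) \<and>
        L (axis 2 1) = c *\<^sub>R ((- sin \<theta>) *\<^sub>R axis 1 1 + cos \<theta> *\<^sub>R axis 2 1))"

end

theory Submission
  imports Defs
begin


definition Rz :: "real \<Rightarrow> real^3^3" where
 "Rz t = vector [vector [cos t, - sin t, 0], vector [sin t, cos t, 0], vector [0,0,1]]"

lemma Rz_comp: "(Rz t *v x)$1 = cos t * x$1 - sin t * x$2"
  "(Rz t *v x)$2 = sin t * x$1 + cos t * x$2" "(Rz t *v x)$3 = x$3"
  by (simp_all add: Rz_def matrix_vector_mult_def sum_3)

lemma Rz_orth: "orthogonal_matrix (Rz t)"
  unfolding orthogonal_matrix_def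
  by (simp add: Rz_def vec_eq_iff matrix_matrix_mult_def transpose_def mat_def forall_3 sum_3 algebra_simps)

lemma Rz_det: "det (Rz t) = 1"
  by (simp add: Rz_def det_3 algebra_simps)


lemma axis_comp: "(axis i c :: real^3)$j = (if j = i then c else 0)"
  by (simp add: axis_def)

lemma det_vec3: "det (vector [a, b, c] :: real^3^3) =
   a$1*b$2*c$3 - a$1*b$3*c$2 - a$2*b$1*c$3 + a$2*b$3*c$1 + a$3*b$1*c$2 - a$3*b$2*c$1"
  by (simp add: det_3 algebra_simps)

lemma norm_sq3: "(norm (x::real^3))^2 = x$1^2 + x$2^2 + x$3^2"
  using dot_square_norm[of x] by (simp add: inner_vec_def sum_3 power2_eq_square)

lemma S2_iff: "x \<in> S2 \<longleftrightarrow> x$1^2 + x$2^2 + x$3^2 = 1"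
proof -
  have "x \<in> S2 \<longleftrightarrow> (norm x)^2 = 1" using norm_ge_zero[of x] unfolding S2_def
    by (smt (verit) mem_sphere_0 power2_eq_1_iff)
  then show ?thesis by (simp add: norm_sq3)
qed

definition pole :: "real^3 \<Rightarrow> bool" where
  "pole p \<longleftrightarrow> p = south_pole \<or> p = north_pole"

lemma pole_comp: "pole p \<Longrightarrow> p$1 = 0 \<and> p$2 = 0 \<and> (p$3 = 1 \<or> p$3 = -1)"
  by (auto simp: pole_def south_pole_def north_pole_def axis_comp)

lemma pole_eq: "pole p \<Longrightarrow> x$1 = 0 \<Longrightarrow> x$2 = 0 \<Longrightarrow> x$3 = p$3 \<Longrightarrow> x = p"
  using pole_comp[of p] by (simp add: vec_eq_iff forall_3)

lemma pole_S2: "pole p \<Longrightarrow> p \<in> S2"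
  using pole_comp[of p] by (auto simp: S2_iff)

lemma Rz_pole: "pole p \<Longrightarrow> Rz t *v p = p"
  using pole_comp[of p] by (simp add: vec_eq_iff forall_3 Rz_comp)

lemma Rz_norm: "norm (Rz t *v x) = norm x"
proof -
  have e0: "\<And>a b c s::real. (c*a - s*b)^2 + (s*a + c*b)^2 = (s^2+c^2)*(a^2+b^2)"
    by (simp add: power2_eq_square algebra_simps)
  have e: "(cos t * x$1 - sin t * x$2)^2 + (sin t * x$1 + cos t * x$2)^2 = x$1^2 + x$2^2"
    using e0[where a="x$1" and b="x$2" and c="cos t" and s="sin t"] by simp
  have "(norm (Rz t *v x))^2 = (norm x)^2"
    unfolding norm_sq3 Rz_comp using e by simp
  then show ?thesis by (simp add: power2_eq_iff_nonneg)
qed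

lemma Rz_S2: "x \<in> S2 \<Longrightarrow> Rz t *v x \<in> S2"
  by (simp add: S2_def Rz_norm)

lemma dist_pole: "pole p \<Longrightarrow> u \<in> S2 \<Longrightarrow> (norm (u - p))^2 = 2 - 2 * p$3 * u$3"
proof -
  assume p: "pole p" and u: "u \<in> S2"
  have "(norm (u - p))^2 = (u$1 - p$1)^2 + (u$2 - p$2)^2 + (u$3 - p$3)^2"
    by (simp add: norm_sq3)
  also have "\<dots> = 2 - 2 * p$3 * u$3" using pole_comp[OF p] u unfolding S2_iff
    by (auto simp: power2_eq_square algebra_simps)
  finally show ?thesis .
qed

lemma dist_pole_eq: "pole p \<Longrightarrow> u \<in> S2 \<Longrightarrow> w \<in> S2 \<Longrightarrow> norm (u - p) = norm (w - p) \<Longrightarrow> u$3 = w$3"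
  using dist_pole[of p u] dist_pole[of p w] pole_comp[of p] by auto

lemma rot_between:
  assumes u: "u \<in> S2" and w: "w \<in> S2" and e: "u$3 = w$3" and ne: "u$1 \<noteq> 0 \<or> u$2 \<noteq> 0"
  shows "\<exists>t. Rz t *v u = w"
proof -
  define r where "r = u$1^2 + u$2^2"
  have r: "r > 0" using ne by (auto simp: r_def add_pos_nonneg add_nonneg_pos)
  have rw: "w$1^2 + w$2^2 = r" using u w e by (simp add: S2_iff r_def)
  define c where "c = (u$1*w$1 + u$2*w$2)/r"
  define s where "s = (u$1*w$2 - u$2*w$1)/r"
  have "c^2 + s^2 = ((u$1*w$1 + u$2*w$2)^2 + (u$1*w$2 - u$2*w$1)^2)/r^2"
    by (simp only: c_def s_def power_divide add_divide_distrib[symmetric])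
  also have "(u$1*w$1 + u$2*w$2)^2 + (u$1*w$2 - u$2*w$1)^2 = (u$1^2 + u$2^2)*(w$1^2+w$2^2)"
    by (simp add: power2_eq_square algebra_simps)
  also have "\<dots> = r^2" using rw by (simp add: r_def power2_eq_square)
  finally have "c^2 + s^2 = 1" using r by simp
  then obtain t where t: "c = cos t" "s = sin t" by (metis sincos_total_2pi)
  have "Rz t *v u = w"
  proof -
    have "c*u$1 - s*u$2 = ((u$1*w$1 + u$2*w$2)*u$1 - (u$1*w$2 - u$2*w$1)*u$2)/r"
      using r by (simp add: c_def s_def field_simps)
    also have "\<dots> = w$1 * r / r" by (simp add: r_def power2_eq_square algebra_simps)
    finally have 1: "cos t * u$1 - sin t * u$2 = w$1" using r t by simp
    have "s*u$1 + c*u$2 = ((u$1*w$2 - u$2*w$1)*u$1 + (u$1*w$1 + u$2*w$2)*u$2)/r"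
      using r by (simp add: c_def s_def field_simps)
    also have "\<dots> = w$2 * r / r" by (simp add: r_def power2_eq_square algebra_simps)
    finally have 2: "sin t * u$1 + cos t * u$2 = w$2" using r t by simp
    show ?thesis using e 1 2 by (simp add: vec_eq_iff forall_3 Rz_comp)
  qed
  then show ?thesis ..
qed



definition GG :: "(real^3 \<Rightarrow> real^3) set \<Rightarrow> bool" where
  "GG G \<longleftrightarrow> G \<subseteq> Diff1_plus_S2 \<and> group_on_S2 G \<and> sharply_3_transitive_S2 G \<and> contains_rotations G"

lemma sn_ne: "south_pole \<noteq> north_pole"
  by (simp add: south_pole_def north_pole_def vec_eq_iff axis_comp)

lemma pole_sn: "pole south_pole" "pole north_pole" by (simp_all add: pole_def)

lemma sp3: "south_pole$3 = -1" and np3: "north_pole$3 = 1"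
  by (simp_all add: south_pole_def north_pole_def axis_comp)

lemma G_C1: "GG G \<Longrightarrow> g \<in> G \<Longrightarrow> C1_S2 g"
  by (auto simp: GG_def Diff1_plus_S2_def)

lemma G_S2: "GG G \<Longrightarrow> g \<in> G \<Longrightarrow> x \<in> S2 \<Longrightarrow> g x \<in> S2"
  using G_C1[of G g] by (auto simp: C1_S2_def)

lemma G_inj: "GG G \<Longrightarrow> g \<in> G \<Longrightarrow> inj_on g S2"
  by (auto simp: GG_def Diff1_plus_S2_def bij_betw_def)

lemma G_comp: "GG G \<Longrightarrow> g \<in> G \<Longrightarrow> h \<in> G \<Longrightarrow> \<exists>k\<in>G. \<forall>x\<in>S2. k x = g (h x)"
  by (auto simp: GG_def group_on_S2_def)

lemma G_inv: "GG G \<Longrightarrow> g \<in> G \<Longrightarrow> \<exists>k\<in>G. \<forall>x\<in>S2. k (g x) = x \<and> g (k x) = x"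
  by (auto simp: GG_def group_on_S2_def)

lemma G_rot: "GG G \<Longrightarrow> \<exists>r\<in>G. \<forall>x\<in>S2. r x = Rz t *v x"
  using Rz_orth[of t] Rz_det[of t] by (auto simp: GG_def contains_rotations_def)

lemma G_sharp: "GG G \<Longrightarrow> g \<in> G \<Longrightarrow> x1 \<in> S2 \<Longrightarrow> x2 \<in> S2 \<Longrightarrow> x3 \<in> S2 \<Longrightarrow>
   x1 \<noteq> x2 \<Longrightarrow> x1 \<noteq> x3 \<Longrightarrow> x2 \<noteq> x3 \<Longrightarrow> g x1 = x1 \<Longrightarrow> g x2 = x2 \<Longrightarrow> g x3 = x3 \<Longrightarrow>
   y \<in> S2 \<Longrightarrow> g y = y"
  unfolding GG_def sharply_3_transitive_S2_def by blast

lemma rext_S2: "x \<noteq> 0 \<Longrightarrow> x /\<^sub>R norm x \<in> S2"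
  by (simp add: S2_def)

lemma G_deriv: "GG G \<Longrightarrow> g \<in> G \<Longrightarrow> x \<noteq> 0 \<Longrightarrow> \<exists>D. (rext g has_derivative D) (at x)"
  using G_C1 unfolding C1_S2_def by blast

lemma G_cont: "GG G \<Longrightarrow> g \<in> G \<Longrightarrow> x \<noteq> 0 \<Longrightarrow> isCont (rext g) x"
  using G_deriv has_derivative_continuous by blast

lemma nonpole_xy: "u \<in> S2 \<Longrightarrow> u \<noteq> south_pole \<Longrightarrow> u \<noteq> north_pole \<Longrightarrow> u$1 \<noteq> 0 \<or> u$2 \<noteq> 0"
proof (rule ccontr)
  assume u: "u \<in> S2" "u \<noteq> south_pole" "u \<noteq> north_pole" and "\<not> (u$1 \<noteq> 0 \<or> u$2 \<noteq> 0)"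
  then have z: "u$1 = 0" "u$2 = 0" by auto
  then have "(u$3)^2 = 1" using u by (simp add: S2_iff)
  then have "u$3 = 1 \<or> u$3 = -1" by (simp add: power2_eq_1_iff)
  then show False using pole_eq[OF pole_sn(1) z] pole_eq[OF pole_sn(2) z] u sp3 np3 by auto
qed

lemma rot_lemma:
  assumes GG: "GG G" and a: "a \<in> G" and b: "b \<in> G"
    and as: "a south_pole = south_pole" and an: "a north_pole = north_pole"
    and bs: "b south_pole = south_pole" and bn: "b north_pole = north_pole"
    and x: "x \<in> S2" "x \<noteq> south_pole" "x \<noteq> north_pole"
    and e: "(a x)$3 = (b x)$3"
  shows "\<exists>t. \<forall>y\<in>S2. b y = Rz t *v a y"
proof -
  have S: "south_pole \<in> S2" "north_pole \<in> S2" using pole_S2 pole_sn by auto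
  have ax: "a x \<in> S2" using G_S2[OF GG a x(1)] .
  have "a x \<noteq> south_pole" using G_inj[OF GG a] x as S by (metis inj_on_eq_iff)
  moreover have "a x \<noteq> north_pole" using G_inj[OF GG a] x an S by (metis inj_on_eq_iff)
  ultimately have "(a x)$1 \<noteq> 0 \<or> (a x)$2 \<noteq> 0" using nonpole_xy ax by blast
  then obtain t where t: "Rz t *v a x = b x" using rot_between[OF ax G_S2[OF GG b x(1)] e] by blast
  obtain r where r: "r \<in> G" "\<forall>y\<in>S2. r y = Rz t *v y" using G_rot[OF GG] by blast
  obtain k where k: "k \<in> G" "\<forall>y\<in>S2. k y = r (a y)" using G_comp[OF GG r(1) a] by blast
  obtain m where m: "m \<in> G" "\<forall>y\<in>S2. m (b y) = y \<and> b (m y) = y" using G_inv[OF GG b] by blast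
  obtain c where c: "c \<in> G" "\<forall>y\<in>S2. c y = m (k y)" using G_comp[OF GG m(1) k(1)] by blast
  have ms: "m south_pole = south_pole" using m S(1) bs by metis
  have mn: "m north_pole = north_pole" using m S(2) bn by metis
  have rs: "r south_pole = south_pole" using r S(1) Rz_pole pole_sn(1) by metis
  have rn: "r north_pole = north_pole" using r S(2) Rz_pole pole_sn(2) by metis
  have cs: "c south_pole = south_pole"
  proof -
    have "c south_pole = m (k south_pole)" using c S(1) by blast
    also have "k south_pole = r (a south_pole)" using k S(1) by blast
    finally show ?thesis using as rs ms by simp
  qed
  have cn: "c north_pole = north_pole"
  proof -
    have "c north_pole = m (k north_pole)" using c S(2) by blast
    also have "k north_pole = r (a north_pole)" using k S(2) by blast
    finally show ?thesis using an rn mn by simp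
  qed
  have cx: "c x = x"
  proof -
    have "c x = m (k x)" using c x(1) by blast
    also have "k x = r (a x)" using k x(1) by blast
    also have "r (a x) = b x" using r ax t by simp
    finally show ?thesis using m x(1) by simp
  qed
  have cid: "\<And>y. y \<in> S2 \<Longrightarrow> c y = y"
    using G_sharp[OF GG c(1) S(1) S(2) x(1) sn_ne _ _ cs cn cx] x by metis
  have "\<forall>y\<in>S2. b y = Rz t *v a y"
  proof
    fix y assume y: "y \<in> S2"
    have ky: "k y \<in> S2" using G_S2[OF GG k(1) y] .
    have "b y = b (c y)" using cid y by simp
    also have "\<dots> = b (m (k y))" using c y by simp
    also have "\<dots> = k y" using m ky by blast
    also have "\<dots> = r (a y)" using k y by blast
    also have "\<dots> = Rz t *v a y" using r G_S2[OF GG a y] by blast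
    finally show "b y = Rz t *v a y" .
  qed
  then show ?thesis ..
qed



lemma pole_norm: "pole p \<Longrightarrow> norm p = 1"
  using pole_S2 by (simp add: S2_def)

lemma pole_ne0: "pole p \<Longrightarrow> p \<noteq> 0"
  using pole_norm by force

lemma rext_pole: "pole p \<Longrightarrow> rext g p = g p"
  using pole_norm[of p] by (simp add: rext_def)

lemma lim_lemma:
  assumes f: "(f has_derivative F) (at p)" and fp: "f p = p"
  shows "((\<lambda>\<tau>::real. norm (f (p + \<tau> *\<^sub>R u) - p) / \<tau>) \<longlongrightarrow> norm (F u)) (at_right 0)"
proof -
  have lin: "linear F" using has_derivative_linear[OF f] .
  have g: "((\<lambda>\<tau>::real. p + \<tau> *\<^sub>R u) has_derivative (\<lambda>\<tau>. \<tau> *\<^sub>R u)) (at 0 within {0<..})"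
    by (auto intro!: derivative_eq_intros)
  have "((\<lambda>\<tau>. f (p + \<tau> *\<^sub>R u)) has_derivative (\<lambda>\<tau>. F (\<tau> *\<^sub>R u))) (at 0 within {0<..})"
    using has_derivative_compose[OF g, of f F] f by simp
  then have "((\<lambda>\<tau>. f (p + \<tau> *\<^sub>R u)) has_derivative (\<lambda>\<tau>. \<tau> *\<^sub>R F u)) (at 0 within {0<..})"
    using linear_cmul[OF lin] by simp
  then have "((\<lambda>y. ((f (p + y *\<^sub>R u) - p) - y *\<^sub>R F u) /\<^sub>R norm y) \<longlongrightarrow> 0) (at_right 0)"
    unfolding has_derivative_at_within using fp by simp
  then have A: "((\<lambda>y. ((f (p + y *\<^sub>R u) - p) - y *\<^sub>R F u) /\<^sub>R norm y + F u) \<longlongrightarrow> F u) (at_right 0)"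
    using tendsto_add[OF _ tendsto_const, of _ 0 "at_right 0" "F u"] by simp
  have E: "eventually (\<lambda>y. ((f (p + y *\<^sub>R u) - p) - y *\<^sub>R F u) /\<^sub>R norm y + F u
        = (f (p + y *\<^sub>R u) - p) /\<^sub>R y) (at_right (0::real))"
    using eventually_at_right_less[of "0::real"]
    by (rule eventually_mono) (simp add: scaleR_diff_right)
  have "((\<lambda>y. (f (p + y *\<^sub>R u) - p) /\<^sub>R y) \<longlongrightarrow> F u) (at_right 0)"
    by (rule Lim_transform_eventually[OF A E])
  then have B: "((\<lambda>y. norm ((f (p + y *\<^sub>R u) - p) /\<^sub>R y)) \<longlongrightarrow> norm (F u)) (at_right 0)"
    by (rule tendsto_norm)
  have E2: "eventually (\<lambda>y. norm ((f (p + y *\<^sub>R u) - p) /\<^sub>R y)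
        = norm (f (p + y *\<^sub>R u) - p) / y) (at_right (0::real))"
    using eventually_at_right_less[of "0::real"]
    by (rule eventually_mono) (simp add: divide_inverse mult.commute)
  show ?thesis by (rule Lim_transform_eventually[OF B E2])
qed

lemma tangent_lemma:
  assumes GG: "GG G" and g: "g \<in> G" and p: "pole p" and gp: "g p = p"
    and L: "(rext g has_derivative L) (at p)"
  shows "(L h)$3 = 0"
proof -
  have rp: "rext g p = p" using rext_pole[OF p] gp by simp
  have d1: "((\<lambda>x. rext g x \<bullet> rext g x) has_derivative (\<lambda>h. L h \<bullet> p + p \<bullet> L h)) (at p)"
    using has_derivative_inner[OF L L] rp by (simp add: add.commute)
  have one: "\<And>x. x \<in> - {0} \<Longrightarrow> rext g x \<bullet> rext g x = 1"
  proof -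
    fix x :: "real^3" assume "x \<in> - {0}"
    then have "rext g x \<in> S2" using G_S2[OF GG g rext_S2[of x]] by (simp add: rext_def)
    then show "rext g x \<bullet> rext g x = 1" by (simp add: S2_def norm_eq_1[symmetric])
  qed
  have d2: "((\<lambda>x. 1::real) has_derivative (\<lambda>h. L h \<bullet> p + p \<bullet> L h)) (at p)"
    by (rule has_derivative_transform_within_open[OF d1, of "- {0}"]) (use one pole_ne0[OF p] in auto)
  have "(\<lambda>h. L h \<bullet> p + p \<bullet> L h) = (\<lambda>h. 0)"
    using has_derivative_unique[OF d2 has_derivative_const] .
  then have "L h \<bullet> p + p \<bullet> L h = 0" by metis
  then have "p$3 * (L h)$3 = 0" using pole_comp[OF p] by (simp add: inner_vec_def sum_3 inner_commute)
  then show ?thesis using pole_comp[OF p] by auto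
qed

lemma Rz_has_derivative: "((\<lambda>x. Rz t *v x) has_derivative (\<lambda>x. Rz t *v x)) F"
  by (simp add: bounded_linear_imp_has_derivative)

lemma rext_left:
  assumes GG: "GG G" and g: "g \<in> G" and a: "\<forall>y\<in>S2. a y = g (Rz t *v y)" and x: "x \<noteq> 0"
  shows "rext a x = rext g (Rz t *v x)"
proof -
  have "rext a x = g (Rz t *v (x /\<^sub>R norm x))" using a rext_S2[OF x] by (simp add: rext_def)
  also have "\<dots> = rext g (Rz t *v x)" by (simp add: rext_def Rz_norm matrix_vector_mult_scaleR)
  finally show ?thesis .
qed

lemma rext_right:
  assumes GG: "GG G" and g: "g \<in> G" and b: "\<forall>y\<in>S2. b y = Rz t *v g y" and x: "x \<noteq> 0"
  shows "rext b x = Rz t *v rext g x"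
  using b G_S2[OF GG g rext_S2[OF x]] rext_S2[OF x] by (simp add: rext_def)

lemma deriv_left:
  assumes GG: "GG G" and g: "g \<in> G" and a: "\<forall>y\<in>S2. a y = g (Rz t *v y)" and p: "pole p"
    and L: "(rext g has_derivative L) (at p)"
  shows "(rext a has_derivative (\<lambda>h. L (Rz t *v h))) (at p)"
proof -
  have "((\<lambda>x. rext g (Rz t *v x)) has_derivative (\<lambda>h. L (Rz t *v h))) (at p)"
    using has_derivative_compose[OF Rz_has_derivative, of "rext g" L] L Rz_pole[OF p] by simp
  then show ?thesis
    using has_derivative_transform_within_open[of _ _ p UNIV "- {0}" "rext a"] rext_left[OF GG g a]
      pole_ne0[OF p] by auto
qed

lemma deriv_right:
  assumes GG: "GG G" and g: "g \<in> G" and b: "\<forall>y\<in>S2. b y = Rz t *v g y" and p: "pole p"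
    and L: "(rext g has_derivative L) (at p)"
  shows "(rext b has_derivative (\<lambda>h. Rz t *v L h)) (at p)"
proof -
  have "((\<lambda>x. Rz t *v rext g x) has_derivative (\<lambda>h. Rz t *v L h)) (at p)"
    using has_derivative_compose[OF L Rz_has_derivative] .
  then show ?thesis
    using has_derivative_transform_within_open[of _ _ p UNIV "- {0}" "rext b"] rext_right[OF GG g b]
      pole_ne0[OF p] by auto
qed



lemma Rz0: "Rz 0 *v v = v"
  by (simp add: vec_eq_iff forall_3 Rz_comp)

lemma Rz_half: "v$3 = 0 \<Longrightarrow> Rz (pi/2) *v (Rz (pi/2) *v v) = - v"
  by (simp add: vec_eq_iff forall_3 Rz_comp)

lemma Rz_tangent: "v$3 = 0 \<Longrightarrow> Rz t *v v = cos t *\<^sub>R v + sin t *\<^sub>R (Rz (pi/2) *v v)"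
  by (simp add: vec_eq_iff forall_3 Rz_comp algebra_simps)

lemma sign_change:
  fixes f :: "real \<Rightarrow> real"
  assumes "a \<le> b" "continuous_on {a..b} f" "f a * f b \<le> 0"
  shows "\<exists>x. a \<le> x \<and> x \<le> b \<and> f x = 0"
proof (cases "f a \<le> 0")
  case True
  then have "0 \<le> f b \<or> f a = 0" using assms(3) by (smt (verit) mult_nonpos_nonpos mult_le_0_iff)
  then show ?thesis
  proof
    assume "0 \<le> f b" then show ?thesis using IVT'[of f a 0 b] True assms by auto
  next
    assume "f a = 0" then show ?thesis using assms(1) by auto
  qed
next
  case False
  then have "f b \<le> 0" using assms(3) by (smt (verit) mult_le_0_iff)
  then show ?thesis using IVT2'[of f b 0 a] False assms by auto
qed



lemma key:
  assumes GG: "GG G" and g: "g \<in> G"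
    and gs: "g south_pole = south_pole" and gn: "g north_pole = north_pole"
    and p: "pole p" and L: "(rext g has_derivative L) (at p)" and v3: "v$3 = 0"
  shows "norm (L (Rz (pi/2) *v v)) = norm (L v)"
proof (rule ccontr)
  define R where "R = Rz (pi/2)"
  define D where "D = norm (L (R *v v)) - norm (L v)"
  assume "norm (L (Rz (pi/2) *v v)) \<noteq> norm (L v)"
  then have D0: "D \<noteq> 0" by (simp add: D_def R_def)
  have linL: "linear L" using has_derivative_linear[OF L] .
  have S: "south_pole \<in> S2" "north_pole \<in> S2" using pole_S2 pole_sn by auto
  have gp: "g p = p" using p gs gn by (auto simp: pole_def)
  obtain r where r: "r \<in> G" "\<forall>y\<in>S2. r y = R *v y" using G_rot[OF GG] unfolding R_def by blast
  obtain a where a: "a \<in> G" "\<forall>y\<in>S2. a y = g (r y)" using G_comp[OF GG g r(1)] by blast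
  obtain b where b: "b \<in> G" "\<forall>y\<in>S2. b y = r (g y)" using G_comp[OF GG r(1) g] by blast
  have a': "\<forall>y\<in>S2. a y = g (Rz (pi/2) *v y)" using a r R_def by auto
  have b': "\<forall>y\<in>S2. b y = Rz (pi/2) *v g y" using b r R_def G_S2[OF GG g] by auto
  have as: "a south_pole = south_pole" using a' S gs Rz_pole pole_sn by auto
  have an: "a north_pole = north_pole" using a' S gn Rz_pole pole_sn by auto
  have bs: "b south_pole = south_pole" using b' S gs Rz_pole pole_sn by auto
  have bn: "b north_pole = north_pole" using b' S gn Rz_pole pole_sn by auto
  have ap: "rext a p = p" using p as an rext_pole[OF p] by (auto simp: pole_def)
  have bp: "rext b p = p" using p bs bn rext_pole[OF p] by (auto simp: pole_def)
  have La: "(rext a has_derivative (\<lambda>h. L (R *v h))) (at p)"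
    using deriv_left[OF GG g a' p L] R_def by simp
  have Lb: "(rext b has_derivative (\<lambda>h. R *v L h)) (at p)"
    using deriv_right[OF GG g b' p L] R_def by simp
  define y where "y = (\<lambda>\<tau> \<theta>. p + \<tau> *\<^sub>R (Rz \<theta> *v v))"
  define \<Phi> where "\<Phi> = (\<lambda>\<tau> \<theta>. norm (rext a (y \<tau> \<theta>) - p) - norm (rext b (y \<tau> \<theta>) - p))"
  have l0: "((\<lambda>\<tau>. \<Phi> \<tau> 0 / \<tau>) \<longlongrightarrow> D) (at_right 0)"
  proof -
    have "((\<lambda>\<tau>. norm (rext a (p + \<tau> *\<^sub>R v) - p) / \<tau> - norm (rext b (p + \<tau> *\<^sub>R v) - p) / \<tau>)
        \<longlongrightarrow> norm (L (R *v v)) - norm (R *v L v)) (at_right 0)"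
      by (intro tendsto_diff lim_lemma[OF La ap] lim_lemma[OF Lb bp])
    then show ?thesis
      by (simp add: \<Phi>_def y_def Rz0 D_def R_def Rz_norm diff_divide_distrib)
  qed
  have l1: "((\<lambda>\<tau>. \<Phi> \<tau> (pi/2) / \<tau>) \<longlongrightarrow> - D) (at_right 0)"
  proof -
    have "((\<lambda>\<tau>. norm (rext a (p + \<tau> *\<^sub>R (R *v v)) - p) / \<tau> - norm (rext b (p + \<tau> *\<^sub>R (R *v v)) - p) / \<tau>)
        \<longlongrightarrow> norm (L (R *v (R *v v))) - norm (R *v L (R *v v))) (at_right 0)"
      by (intro tendsto_diff lim_lemma[OF La ap] lim_lemma[OF Lb bp])
    moreover have "norm (L (R *v (R *v v))) = norm (L v)"
      using Rz_half[OF v3] linear_neg[OF linL] R_def by simp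
    ultimately show ?thesis
      by (simp add: \<Phi>_def y_def D_def R_def Rz_norm diff_divide_distrib)
  qed
  have "((\<lambda>\<tau>. (\<Phi> \<tau> 0 / \<tau>) * (\<Phi> \<tau> (pi/2) / \<tau>)) \<longlongrightarrow> D * (- D)) (at_right 0)"
    by (intro tendsto_mult l0 l1)
  moreover have "D * (- D) < 0" using D0 by (metis mult_minus_right neg_less_0_iff_less not_real_square_gt_zero)
  ultimately have ev: "eventually (\<lambda>\<tau>. (\<Phi> \<tau> 0 / \<tau>) * (\<Phi> \<tau> (pi/2) / \<tau>) < 0) (at_right 0)"
    using order_tendstoD(2) by blast
  have "eventually (\<lambda>\<tau>. 0 < \<tau> \<and> (\<Phi> \<tau> 0 / \<tau>) * (\<Phi> \<tau> (pi/2) / \<tau>) < 0) (at_right (0::real))"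
    using eventually_conj[OF eventually_at_right_less ev] .
  then obtain \<tau> where \<tau>: "0 < \<tau>" "(\<Phi> \<tau> 0 / \<tau>) * (\<Phi> \<tau> (pi/2) / \<tau>) < 0"
    using eventually_happens trivial_limit_at_right_real by blast
  have neg: "\<Phi> \<tau> 0 * \<Phi> \<tau> (pi/2) \<le> 0"
  proof -
    have "\<Phi> \<tau> 0 * \<Phi> \<tau> (pi/2) = ((\<Phi> \<tau> 0 / \<tau>) * (\<Phi> \<tau> (pi/2) / \<tau>)) * \<tau>^2"
      using \<tau>(1) by (simp add: field_simps power2_eq_square)
    also have "\<dots> \<le> 0" using \<tau>(2) zero_le_power2[of \<tau>] mult_nonpos_nonneg[of "(\<Phi> \<tau> 0 / \<tau>) * (\<Phi> \<tau> (pi/2) / \<tau>)" "\<tau>^2"] by linarith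
    finally show ?thesis .
  qed
  have p3: "p$3 \<noteq> 0" using pole_comp[OF p] by auto
  have y3: "\<And>\<theta>. (y \<tau> \<theta>)$3 = p$3" using v3 by (simp add: y_def Rz_comp)
  have yne: "\<And>\<theta>. y \<tau> \<theta> \<noteq> 0" using y3 p3 by (metis zero_index)
  have yalt: "y \<tau> = (\<lambda>\<theta>. p + \<tau> *\<^sub>R (cos \<theta> *\<^sub>R v + sin \<theta> *\<^sub>R (R *v v)))"
    unfolding y_def R_def by (rule ext, subst Rz_tangent[OF v3], rule refl)
  have ycont: "\<And>\<theta>. isCont (y \<tau>) \<theta>"
    unfolding yalt by (intro continuous_intros)
  have cont: "continuous_on {0..pi/2} (\<Phi> \<tau>)"
  proof (intro continuous_at_imp_continuous_on ballI)
    fix \<theta> :: real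
    have ca: "isCont (\<lambda>\<theta>. rext a (y \<tau> \<theta>)) \<theta>"
      by (rule isCont_o2[OF ycont G_cont[OF GG a(1) yne]])
    have cb: "isCont (\<lambda>\<theta>. rext b (y \<tau> \<theta>)) \<theta>"
      by (rule isCont_o2[OF ycont G_cont[OF GG b(1) yne]])
    show "isCont (\<Phi> \<tau>) \<theta>" unfolding \<Phi>_def
      by (intro continuous_intros ca cb)
  qed
  have pi0: "0 \<le> pi/2" by simp
  obtain \<theta> where "\<Phi> \<tau> \<theta> = 0"
    using sign_change[OF pi0 cont neg] by blast
  then have eqd: "norm (rext a (y \<tau> \<theta>) - p) = norm (rext b (y \<tau> \<theta>) - p)"
    by (simp add: \<Phi>_def)
  define x where "x = y \<tau> \<theta> /\<^sub>R norm (y \<tau> \<theta>)"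
  have xS: "x \<in> S2" using rext_S2[OF yne] x_def by simp
  have ax: "rext a (y \<tau> \<theta>) = a x" and bx: "rext b (y \<tau> \<theta>) = b x" by (simp_all add: rext_def x_def)
  have v0: "v \<noteq> 0" using D0 by (auto simp: D_def linear_0[OF linL])
  have w: "Rz \<theta> *v v \<noteq> 0" using v0 Rz_norm[of \<theta> v] by auto
  have w3: "(Rz \<theta> *v v)$3 = 0" using v3 by (simp add: Rz_comp)
  have w12: "(Rz \<theta> *v v)$1 \<noteq> 0 \<or> (Rz \<theta> *v v)$2 \<noteq> 0"
    using w w3 by (auto simp: vec_eq_iff forall_3)
  have ny: "norm (y \<tau> \<theta>) > 0" using yne by simp
  have x12: "x$1 \<noteq> 0 \<or> x$2 \<noteq> 0"
    using w12 \<tau>(1) ny pole_comp[OF p] by (auto simp: x_def y_def)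
  have xs: "x \<noteq> south_pole" using x12 pole_comp[OF pole_sn(1)] by auto
  have xn: "x \<noteq> north_pole" using x12 pole_comp[OF pole_sn(2)] by auto
  have "(a x)$3 = (b x)$3"
    using dist_pole_eq[OF p G_S2[OF GG a(1) xS] G_S2[OF GG b(1) xS]] eqd ax bx by simp
  then obtain t where t: "\<forall>z\<in>S2. b z = Rz t *v a z"
    using rot_lemma[OF GG a(1) b(1) as an bs bn xS xs xn] by blast
  have "((\<lambda>z. Rz t *v rext a z) has_derivative (\<lambda>h. Rz t *v L (R *v h))) (at p)"
    using has_derivative_compose[OF La Rz_has_derivative] .
  then have Lb2: "(rext b has_derivative (\<lambda>h. Rz t *v L (R *v h))) (at p)"
    using has_derivative_transform_within_open[of _ _ p UNIV "- {0}" "rext b"]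
      rext_right[OF GG a(1) t] pole_ne0[OF p] by auto
  have "(\<lambda>h. R *v L h) = (\<lambda>h. Rz t *v L (R *v h))"
    using has_derivative_unique[OF Lb Lb2] .
  then have "R *v L v = Rz t *v L (R *v v)" by metis
  then have "norm (L v) = norm (L (R *v v))" using Rz_norm R_def by metis
  then show False using D0 D_def by simp
qed



lemma conf_alg:
  fixes A B :: "real^3"
  assumes A3: "A$3 = 0" and B3: "B$3 = 0" and n: "A$1^2 + A$2^2 = B$1^2 + B$2^2"
    and o: "A$1 * B$1 + A$2 * B$2 = 0" and d: "A$1 * B$2 - A$2 * B$1 > 0"
  shows "\<exists>c>0. \<exists>\<theta>::real.
        A = c *\<^sub>R (cos \<theta> *\<^sub>R axis 1 1 + sin \<theta> *\<^sub>R axis 2 1) \<and>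
        B = c *\<^sub>R ((- sin \<theta>) *\<^sub>R axis 1 1 + cos \<theta> *\<^sub>R axis 2 1)"
proof -
  define N where "N = A$1^2 + A$2^2"
  define Dt where "Dt = A$1 * B$2 - A$2 * B$1"
  have lag: "Dt^2 + (A$1 * B$1 + A$2 * B$2)^2 = (A$1^2 + A$2^2) * (B$1^2 + B$2^2)"
    by (simp add: Dt_def power2_eq_square algebra_simps)
  then have "Dt^2 = N^2" using o n by (simp add: N_def power2_eq_square)
  moreover have "Dt > 0" using d Dt_def by simp
  moreover have "N \<ge> 0" by (simp add: N_def)
  ultimately have DN: "Dt = N" by (simp add: power2_eq_iff_nonneg)
  have "(B$1 + A$2)^2 + (B$2 - A$1)^2 = (B$1^2 + B$2^2) + (A$1^2 + A$2^2) - 2 * Dt"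
    by (simp add: Dt_def power2_eq_square algebra_simps)
  also have "\<dots> = 0" using DN n by (simp add: N_def)
  finally have "(B$1 + A$2)^2 + (B$2 - A$1)^2 = 0" .
  then have b1: "B$1 = - A$2" and b2: "B$2 = A$1"
    by (simp_all add: sum_power2_eq_zero_iff)
  have Npos: "N > 0" using DN d Dt_def by simp
  define c where "c = sqrt N"
  have c: "c > 0" using Npos by (simp add: c_def)
  have cc: "c^2 = N" using Npos by (simp add: c_def)
  have "(A$1 / c)^2 + (A$2 / c)^2 = N / c^2"
    by (simp only: power_divide add_divide_distrib[symmetric] N_def)
  also have "\<dots> = 1" using cc Npos by simp
  finally have "(A$1 / c)^2 + (A$2 / c)^2 = 1" .
  then obtain \<theta> where th: "A$1 / c = cos \<theta>" "A$2 / c = sin \<theta>" by (metis sincos_total_2pi)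
  have a1: "A$1 = c * cos \<theta>" and a2: "A$2 = c * sin \<theta>" using th c by (simp_all add: field_simps)
  have "A = c *\<^sub>R (cos \<theta> *\<^sub>R axis 1 1 + sin \<theta> *\<^sub>R axis 2 1)"
    using a1 a2 A3 by (simp add: vec_eq_iff forall_3 axis_comp)
  moreover have "B = c *\<^sub>R ((- sin \<theta>) *\<^sub>R axis 1 1 + cos \<theta> *\<^sub>R axis 2 1)"
    using a1 a2 B3 b1 b2 by (simp add: vec_eq_iff forall_3 axis_comp)
  ultimately show ?thesis using c by blast
qed

lemma final:
  assumes GG: "GG G" and g: "g \<in> G"
    and gs: "g south_pole = south_pole" and gn: "g north_pole = north_pole"
    and p: "p \<in> {south_pole, north_pole}" and L: "(rext g has_derivative L) (at p)"
  shows "conformal_at_pole L"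
proof -
  define e1 :: "real^3" where "e1 = axis 1 1"
  define e2 :: "real^3" where "e2 = axis 2 1"
  have pp: "pole p" using p by (auto simp: pole_def)
  have gp: "g p = p" using p gs gn by auto
  have linL: "linear L" using has_derivative_linear[OF L] .
  have A3: "(L e1)$3 = 0" and B3: "(L e2)$3 = 0" using tangent_lemma[OF GG g pp gp L] by auto
  have e13: "e1$3 = 0" and e23: "e2$3 = 0" by (simp_all add: e1_def e2_def axis_comp)
  have r1: "Rz (pi/2) *v e1 = e2" by (simp add: vec_eq_iff forall_3 Rz_comp e1_def e2_def axis_comp)
  have r12: "Rz (pi/2) *v (e1 + e2) = e2 - e1"
    by (simp add: vec_eq_iff forall_3 Rz_comp e1_def e2_def axis_comp)
  have k1: "norm (L e2) = norm (L e1)" using key[OF GG g gs gn pp L e13] r1 by simp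
  have k2: "norm (L e2 - L e1) = norm (L e1 + L e2)"
    using key[OF GG g gs gn pp L, of "e1 + e2"] e13 e23 r12 linear_add[OF linL] linear_diff[OF linL]
    by simp
  have n: "(L e1)$1^2 + (L e1)$2^2 = (L e2)$1^2 + (L e2)$2^2"
    using arg_cong[OF k1, of "\<lambda>x. x^2"] A3 B3 by (simp add: norm_sq3)
  have "((L e2)$1 - (L e1)$1)^2 + ((L e2)$2 - (L e1)$2)^2 = ((L e1)$1 + (L e2)$1)^2 + ((L e1)$2 + (L e2)$2)^2"
    using arg_cong[OF k2, of "\<lambda>x. x^2"] A3 B3 by (simp add: norm_sq3)
  then have o: "(L e1)$1 * (L e2)$1 + (L e1)$2 * (L e2)$2 = 0"
    by (simp add: power2_eq_square algebra_simps)
  have op: "orientation_preserving_S2 g" using GG g by (auto simp: GG_def Diff1_plus_S2_def)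
  have pS: "p \<in> S2" using pole_S2[OF pp] .
  have d: "(L e1)$1 * (L e2)$2 - (L e1)$2 * (L e2)$1 > 0"
  proof (cases "p = south_pole")
    case True
    have p3: "p$1 = 0" "p$2 = 0" "p$3 = -1" using True sp3 pole_comp[OF pp] by auto
    have "det (vector [p, e2, e1] :: real^3^3) > 0"
      using p3 by (simp add: det_vec3 e1_def e2_def axis_comp)
    moreover have "e2 \<bullet> p = 0" "e1 \<bullet> p = 0" using p3 by (simp_all add: e1_def e2_def inner_vec_def sum_3 axis_comp)
    ultimately have "det (vector [g p, L e2, L e1] :: real^3^3) > 0"
      using op pS L unfolding orientation_preserving_S2_def by blast
    then show ?thesis using gp p3 A3 B3 by (simp add: det_vec3 algebra_simps)
  next
    case False
    then have "p = north_pole" using p by auto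
    then have p3: "p$1 = 0" "p$2 = 0" "p$3 = 1" using np3 pole_comp[OF pp] by auto
    have "det (vector [p, e1, e2] :: real^3^3) > 0"
      using p3 by (simp add: det_vec3 e1_def e2_def axis_comp)
    moreover have "e2 \<bullet> p = 0" "e1 \<bullet> p = 0" using p3 by (simp_all add: e1_def e2_def inner_vec_def sum_3 axis_comp)
    ultimately have "det (vector [g p, L e1, L e2] :: real^3^3) > 0"
      using op pS L unfolding orientation_preserving_S2_def by blast
    then show ?thesis using gp p3 A3 B3 by (simp add: det_vec3 algebra_simps)
  qed
  show ?thesis unfolding conformal_at_pole_def
    using conf_alg[OF A3 B3 n o d] unfolding e1_def e2_def .
qed

theorem mainTheorem17:
  fixes G :: "(real^3 \<Rightarrow> real^3) set"
  assumes "G \<subseteq> Diff1_plus_S2"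
    and "group_on_S2 G"
    and "sharply_3_transitive_S2 G"
    and "contains_rotations G"
  shows "\<forall>g\<in>G. g south_pole = south_pole \<and> g north_pole = north_pole \<longrightarrow>
           (\<forall>p\<in>{south_pole, north_pole}. \<forall>L.
              (rext g has_derivative L) (at p) \<longrightarrow> conformal_at_pole L)"
proof -
  have GG: "GG G" using assms by (simp add: GG_def)
  show ?thesis using final[OF GG] by blast
qed

end
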